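(* Let $$\mathcal{X} = \left\{(A, B) \in M_4(\mathbb{C}) \times M_4(\mathbb{C}) : \operatorname{Tr} A = \operatorname{Tr} B = 0,\ \|A\|_F^2 + \|B\|_F^2 = \tfrac{1}{4}\right\},$$ and let $\mathcal{Y} \subseteq \mathcal{X}$ be the set of those $(A,B) \in \mathcal{X}$ such that $A$ has four pairwise distinct eigenvalues and $B$ has four pairwise distinct eigenvalues. For $(A,B)$ put $X = A \otimes I_4 + I_4 \otimes B \in M_{16}(\mathbb{C})$ and $\phi(A,B) = \sigma_1(X)^2 + \sigma_2(X)^2$, where $\sigma_1(X)\ge\sigma_2(X)$ are the two largest singular values of $X$. Then $\phi(A,B) \leq \frac{1}{2}$ for all $(A,B) \in \mathcal{X}$ if and only if $\phi(A,B) \leq \frac12$ for all $(A,B) \in \mathcal{Y}$.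
   Context: $\|\cdot\|_F$ denotes the Frobenius norm, $\|A\|_F = (\operatorname{Tr}(A^*A))^{1/2}$. $\otimes$ denotes the Kronecker product. *)

theory Defs
  imports "Jordan_Normal_Form.Schur_Decomposition" "HOL-Library.Multiset"
begin

definition mat_tr :: "complex mat \<Rightarrow> complex" where
  "mat_tr A = (\<Sum>i<dim_row A. A $$ (i, i))"

(* Frobenius norm: ||A||_F = (Tr (A^* A))^(1/2); Tr(A^* A) is a nonnegative real *)
definition frob_norm :: "complex mat \<Rightarrow> real" where
  "frob_norm A = sqrt (Re (mat_tr (mat_adjoint A * A)))"

definition kron :: "complex mat \<Rightarrow> complex mat \<Rightarrow> complex mat" where
  "kron A B = mat (dim_row A * dim_row B) (dim_col A * dim_col B)
     (\<lambda>(i, j). A $$ (i div dim_row B, j div dim_col B) * B $$ (i mod dim_row B, j mod dim_col B))"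

(* Singular values of X (square), in non-increasing order, with multiplicity:
   square roots of the eigenvalues (roots of the characteristic polynomial,
   counted with multiplicity) of the Hermitian PSD matrix X^* X. *)
definition singular_values :: "complex mat \<Rightarrow> real list" where
  "singular_values X =
     rev (sorted_list_of_multiset
       (image_mset (\<lambda>z. sqrt (Re z)) (proots (char_poly (mat_adjoint X * X)))))"

definition sigma :: "complex mat \<Rightarrow> nat \<Rightarrow> real" where
  "sigma X k = singular_values X ! (k - 1)"

definition phi :: "complex mat \<Rightarrow> complex mat \<Rightarrow> real" where
  "phi A B = (let X = kron A (1\<^sub>m 4) + kron (1\<^sub>m 4) B in (sigma X 1)^2 + (sigma X 2)^2)"

definition calX :: "(complex mat \<times> complex mat) set" where
  "calX = {(A, B). A \<in> carrier_mat 4 4 \<and> B \<in> carrier_mat 4 4 \<and>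
             mat_tr A = 0 \<and> mat_tr B = 0 \<and> (frob_norm A)^2 + (frob_norm B)^2 = 1/4}"

definition calY :: "(complex mat \<times> complex mat) set" where
  "calY = {(A, B). (A, B) \<in> calX \<and> card {z. eigenvalue A z} = 4 \<and> card {z. eigenvalue B z} = 4}"

end

theory Submission
  imports Defs
begin

lemma adj_dim[simp]: "dim_row (mat_adjoint A) = dim_col A" "dim_col (mat_adjoint A) = dim_row A"
  unfolding mat_adjoint_def by auto

lemma adj_carrier[simp]: "A \<in> carrier_mat n m \<Longrightarrow> mat_adjoint A \<in> carrier_mat m n"
  unfolding carrier_mat_def by auto

lemma adj_index[simp]: "i < dim_col A \<Longrightarrow> j < dim_row A \<Longrightarrow> mat_adjoint A $$ (i,j) = cnj (A $$ (j,i))"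
  unfolding mat_adjoint_def by (simp add: mat_of_rows_index)

lemma adj_adj[simp]: "mat_adjoint (mat_adjoint (A :: complex mat)) = A"
  by (rule eq_matI, auto)

lemma adj_mult: assumes "(A :: complex mat) \<in> carrier_mat n m" "B \<in> carrier_mat m k"
  shows "mat_adjoint (A * B) = mat_adjoint B * mat_adjoint A"
  using assms by (intro eq_matI, auto simp: scalar_prod_def sum_conjugate[symmetric] ac_simps)

lemma adj_one[simp]: "mat_adjoint (1\<^sub>m n :: complex mat) = 1\<^sub>m n"
  by (rule eq_matI, auto)

lemma adj_vec: assumes A: "(A :: complex mat) \<in> carrier_mat n m" and x: "x \<in> carrier_vec m" and y: "y \<in> carrier_vec n"
  shows "(A *\<^sub>v x) \<bullet>c y = x \<bullet>c (mat_adjoint A *\<^sub>v y)"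
proof -
  have "(A *\<^sub>v x) \<bullet>c y = (\<Sum>i<n. (\<Sum>j<m. A $$ (i,j) * x $ j) * cnj (y $ i))"
    using A x y by (auto simp: scalar_prod_def lessThan_atLeast0)
  also have "\<dots> = (\<Sum>j<m. x $ j * cnj (\<Sum>i<n. cnj (A $$ (i,j)) * y $ i))"
    by (simp add: sum_distrib_left sum_distrib_right ac_simps sum.swap[of _ "{..<n}"])
  also have "\<dots> = x \<bullet>c (mat_adjoint A *\<^sub>v y)"
    using A x y by (auto simp: scalar_prod_def lessThan_atLeast0)
  finally show ?thesis .
qed

definition nrm :: "complex vec \<Rightarrow> complex vec" where
  "nrm w = complex_of_real (1 / sqrt (Re (w \<bullet>c w))) \<cdot>\<^sub>v w"

lemma cprod_real: "w \<bullet>c w = complex_of_real (Re (w \<bullet>c w))" "Re (w \<bullet>c (w :: complex vec)) \<ge> 0"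
proof -
  have "w \<bullet>c w = (\<Sum>i<dim_vec w. complex_of_real ((cmod (w $ i))^2))"
    by (auto simp: scalar_prod_def lessThan_atLeast0 intro!: sum.cong) (metis complex_norm_square of_real_power)
  then show "w \<bullet>c w = complex_of_real (Re (w \<bullet>c w))" "Re (w \<bullet>c w) \<ge> 0"
    by (auto simp: sum_nonneg)
qed

lemma nrm_carrier[simp]: "w \<in> carrier_vec n \<Longrightarrow> nrm w \<in> carrier_vec n"
  unfolding nrm_def by auto

lemma nrm_prod: assumes "w \<in> carrier_vec n" "v \<in> carrier_vec n"
  shows "nrm w \<bullet>c nrm v = complex_of_real (1 / sqrt (Re (w \<bullet>c w)) * (1 / sqrt (Re (v \<bullet>c v)))) * (w \<bullet>c v)"
  using assms unfolding nrm_def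
  by (simp add: conjugate_smult_vec smult_scalar_prod_distrib scalar_prod_smult_distrib)

lemma nrm_unit: assumes "w \<in> carrier_vec n" "w \<noteq> 0\<^sub>v n" shows "nrm w \<bullet>c nrm w = 1"
proof -
  have pos: "Re (w \<bullet>c w) > 0"
  proof -
    have "w \<bullet>c w \<noteq> 0" using assms by simp
    then show ?thesis using cprod_real[of w] by (metis less_eq_real_def of_real_0)
  qed
  have "nrm w \<bullet>c nrm w = complex_of_real (1 / sqrt (Re (w \<bullet>c w)) * (1 / sqrt (Re (w \<bullet>c w)))) * complex_of_real (Re (w \<bullet>c w))"
    using nrm_prod[OF assms(1) assms(1)] cprod_real(1)[of w] by metis
  also have "\<dots> = 1" using pos
    by (simp flip: of_real_mult add: real_sqrt_mult[symmetric])
  finally show ?thesis .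
qed

lemma nrm_zero_iff: assumes "w \<in> carrier_vec n" shows "nrm w = 0\<^sub>v n \<longleftrightarrow> w = 0\<^sub>v n"
proof
  assume "nrm w = 0\<^sub>v n"
  show "w = 0\<^sub>v n"
  proof (rule ccontr)
    assume "w \<noteq> 0\<^sub>v n"
    from nrm_unit[OF assms this] \<open>nrm w = 0\<^sub>v n\<close> show False by simp
  qed
qed (auto simp: nrm_def intro!: eq_vecI)

lemma corthogonal_nrm: assumes "corthogonal ws" "set ws \<subseteq> carrier_vec n"
  shows "corthogonal (map nrm ws)"
proof (rule corthogonalI)
  fix i j assume i: "i < length (map nrm ws)" and j: "j < length (map nrm ws)"
  have wi: "ws ! i \<in> carrier_vec n" and wj: "ws ! j \<in> carrier_vec n" using i j assms(2) by auto
  show "map nrm ws ! i \<bullet>c map nrm ws ! j = 0 \<longleftrightarrow> i \<noteq> j"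
  proof (cases "i = j")
    case True
    have "ws ! i \<bullet>c ws ! i \<noteq> 0" using corthogonalD[OF assms(1)] i by auto
    then have "ws ! i \<noteq> 0\<^sub>v n" using wi by auto
    then show ?thesis using True nrm_unit[OF wi] i by auto
  next
    case False
    then have "ws ! i \<bullet>c ws ! j = 0" using corthogonalD[OF assms(1)] i j by auto
    then show ?thesis using False nrm_prod[OF wi wj] i j by auto
  qed
qed

lemma corthogonal_inv_adj: assumes ws: "set ws \<subseteq> carrier_vec n" "length ws = n"
  and unit: "\<And>w. w \<in> set ws \<Longrightarrow> w \<bullet>c w = 1"
  shows "corthogonal_inv (mat_of_cols n ws) = mat_adjoint (mat_of_cols n ws)"
proof -
  have e: "map vec_inv (cols (mat_of_cols n ws)) = map conjugate (cols (mat_of_cols n ws))"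
    using ws unit by (intro map_cong) (auto simp: vec_inv_def)
  show ?thesis unfolding corthogonal_inv_def mat_adjoint_def by (simp only: e)
qed

lemma nrm_eigen: assumes A: "(A::complex mat) \<in> carrier_mat n n" and v: "v \<in> carrier_vec n"
  and ev: "A *\<^sub>v v = e \<cdot>\<^sub>v v" shows "A *\<^sub>v nrm v = e \<cdot>\<^sub>v nrm v"
  unfolding nrm_def using A v ev by (simp add: mult_mat_vec smult_smult_assoc mult.commute)

lemma adj_four_block: assumes P: "(P :: complex mat) \<in> carrier_mat k k"
  shows "mat_adjoint (four_block_mat (1\<^sub>m 1) (0\<^sub>m 1 k) (0\<^sub>m k 1) P) =
         four_block_mat (1\<^sub>m 1) (0\<^sub>m 1 k) (0\<^sub>m k 1) (mat_adjoint P)"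
  using P by (intro eq_matI) (auto simp: index_mat_four_block)

lemma unitary_schur:
  assumes "(A::complex mat) \<in> carrier_mat n n"
      and "char_poly A = (\<Prod> (e :: complex) \<leftarrow> es. [:- e, 1:])"
  shows "\<exists>B P. similar_mat_wit A B P (mat_adjoint P) \<and> upper_triangular B \<and> diag_mat B = es"
  using assms
proof (induct es arbitrary: n A)
  case Nil
  with degree_monic_char_poly[of A n] have n0: "n = 0" by auto
  have "similar_mat_wit A A (1\<^sub>m n) (mat_adjoint (1\<^sub>m n))"
    using similar_mat_wit_refl[OF Nil(1)] by simp
  moreover have "upper_triangular A" "diag_mat A = []" using Nil(1) n0
    by (auto simp: diag_mat_def upper_triangular_def)
  ultimately show ?case by blast
next
  case (Cons e es n A)
  let ?n1 = "n - 1"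
  from Cons have A: "A \<in> carrier_mat n n" and dim: "dim_row A = n" by auto
  let ?cp = "char_poly A"
  from Cons(3)
  have cp: "?cp = [: -e, 1 :] * (\<Prod>e \<leftarrow> es. [:- e, 1:])" by auto
  have mon: "monic (\<Prod>e\<leftarrow> es. [:- e, 1:])" by (rule monic_prod_list, auto)
  have deg: "degree ?cp = Suc (degree (\<Prod>e\<leftarrow> es. [:- e, 1:]))" unfolding cp
    by (subst degree_mult_eq, insert mon, auto)
  with degree_monic_char_poly[OF A] have n: "n \<noteq> 0" by auto
  define v0 where "v0 = find_eigenvector A e"
  define b where "b = basis_completion v0"
  define ws0 where "ws0 = gram_schmidt n b"
  define ws where "ws = map nrm ws0"
  define v where "v = nrm v0"
  define W where "W = mat_of_cols n ws"
  define W' where "W' = corthogonal_inv W"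
  define A' where "A' = W' * A * W"
  obtain A1 A2 A0 A3 where splitA': "split_block A' 1 1 = (A1,A2,A0,A3)"
    by (cases "split_block A' 1 1", auto)
  have e: "eigenvalue A e" 
    unfolding eigenvalue_root_char_poly[OF A] cp by simp
  from find_eigenvector[OF A e] have ev: "eigenvector A v0 e" unfolding v0_def .
  from this[unfolded eigenvector_def]
  have v0[simp]: "v0 \<in> carrier_vec n" and v00: "v0 \<noteq> 0\<^sub>v n" using A by auto
  interpret cof_vec_space n "TYPE(complex)" .
  from basis_completion[OF v0 v00, folded b_def]
  have span_b: "span (set b) = carrier_vec n" and dist_b: "distinct b" 
    and indep: "\<not> lin_dep (set b)" and b: "set b \<subseteq> carrier_vec n" and hdb: "hd b = v0" 
    and len_b: "length b = n" by auto
  from hdb len_b n obtain vs where bv: "b = v0 # vs" by (cases b, auto)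
  from gram_schmidt_result[OF b dist_b indep refl, folded ws0_def]
  have ws0: "set ws0 \<subseteq> carrier_vec n" "corthogonal ws0" "length ws0 = n" 
    by (auto simp: len_b)
  from gram_schmidt_hd[OF v0, of vs, folded bv] have hdws0: "hd ws0 = v0" unfolding ws0_def .
  have ws: "set ws \<subseteq> carrier_vec n" "corthogonal ws" "length ws = n"
    using ws0 corthogonal_nrm[OF ws0(2) ws0(1)] unfolding ws_def by auto
  have hdws: "hd ws = v" unfolding ws_def v_def using hdws0 ws0(3) n by (cases ws0, auto)
  have unit: "\<And>w. w \<in> set ws \<Longrightarrow> w \<bullet>c w = 1"
  proof -
    fix w assume "w \<in> set ws"
    then obtain i where i: "i < length ws0" and w: "w = nrm (ws0 ! i)" unfolding ws_def
      by (auto simp: in_set_conv_nth)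
    have c: "ws0 ! i \<in> carrier_vec n" using i ws0 by auto
    have "ws0 ! i \<bullet>c ws0 ! i \<noteq> 0" using corthogonalD[OF ws0(2) i i] by auto
    then have "ws0 ! i \<noteq> 0\<^sub>v n" using c by auto
    then show "w \<bullet>c w = 1" using nrm_unit[OF c] w by auto
  qed
  have W'adj: "W' = mat_adjoint W" unfolding W'_def W_def
    by (rule corthogonal_inv_adj[OF ws(1) ws(3) unit])
  have orth_W: "corthogonal_mat W" using orthogonal_mat_of_cols ws unfolding W_def.
  have W: "W \<in> carrier_mat n n"
    using ws unfolding W_def using mat_of_cols_carrier(1)[of n ws] by auto
  have W': "W' \<in> carrier_mat n n" unfolding W'_def corthogonal_inv_def using W 
    by (auto simp: mat_of_rows_def)  
  from corthogonal_inv_result[OF orth_W] 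
  have W'W: "inverts_mat W' W" unfolding W'_def .
  hence WW': "inverts_mat W W'" using mat_mult_left_right_inverse[OF W' W] W' W
    unfolding inverts_mat_def by auto
  have A': "A' \<in> carrier_mat n n" using W W' A unfolding A'_def by auto
  have A'A_wit: "similar_mat_wit A' A W' W"
    by (rule similar_mat_witI[of _ _ n], insert W W' A A' W'W WW', auto simp: A'_def
    inverts_mat_def)
  hence A'A: "similar_mat A' A" unfolding similar_mat_def by blast
  from similar_mat_wit_sym[OF A'A_wit] have simAA': "similar_mat_wit A A' W W'" by auto
  have eigen0: "A *\<^sub>v v0 = e \<cdot>\<^sub>v v0"
    using v0_def find_eigenvector[OF A e] A
    unfolding eigenvector_def by auto
  have eigen: "A *\<^sub>v v = e \<cdot>\<^sub>v v" unfolding v_def by (rule nrm_eigen[OF A v0 eigen0])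
  have v: "v \<in> carrier_vec n" unfolding v_def by simp
  have v0': "v \<noteq> 0\<^sub>v n" unfolding v_def using nrm_zero_iff[OF v0] v00 by simp
  let ?f = "(\<lambda> i. if i = 0 then e else 0)"
  have col0: "col A' 0 = vec n ?f"
    unfolding A'_def W'_def W_def
    using corthogonal_col_ev_0[OF A v v0' eigen n hdws ws].
  from A' n have "dim_row A' = 1 + ?n1" "dim_col A' = 1 + ?n1" by auto
  from split_block[OF splitA' this] have A2: "A2 \<in> carrier_mat 1 ?n1"
    and A3: "A3 \<in> carrier_mat ?n1 ?n1" 
    and A'block: "A' = four_block_mat A1 A2 A0 A3" by auto
  have A1id: "A1 = mat 1 1 (\<lambda> _. e)"
    using splitA'[unfolded split_block_def Let_def] arg_cong[OF col0, of "\<lambda> v. v $ 0"] A' n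
    by (auto simp: col_def)
  have A1: "A1 \<in> carrier_mat 1 1" unfolding A1id by auto
  {
    fix i
    assume "i < ?n1"
    with arg_cong[OF col0, of "\<lambda> v. v $ Suc i"] A'
    have "A' $$ (Suc i, 0) = 0" by auto
  } note A'0 = this
  have A0id: "A0 = 0\<^sub>m ?n1 1"
    using splitA'[unfolded split_block_def Let_def] A'0 A' by auto
  have A0: "A0 \<in> carrier_mat ?n1 1" unfolding A0id by auto
  from cp char_poly_similar[OF A'A]
  have cp: "char_poly A' = [: -e,1 :] * (\<Prod> e \<leftarrow> es. [:- e, 1:])" by simp
  also have "char_poly A' = char_poly A1 * char_poly A3" 
    unfolding A'block A0id
    by (rule char_poly_four_block_zeros_col[OF A1 A2 A3])
  also have "char_poly A1 = [: -e,1 :]"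
    by (simp add: A1id char_poly_defs det_def sign_def)
  finally have cp: "char_poly A3 = (\<Prod> e \<leftarrow> es. [:- e, 1:])"
    by (metis mult_cancel_left pCons_eq_0_iff zero_neq_one)
  from Cons(1)[OF A3 cp] obtain B P' where simIH: "similar_mat_wit A3 B P' (mat_adjoint P')"
    and ut: "upper_triangular B" and diag: "diag_mat B = es" by blast
  define Q' where "Q' = mat_adjoint P'"
  note simIH = simIH[folded Q'_def]
  from similar_mat_witD2[OF A3 simIH] 
  have B: "B \<in> carrier_mat ?n1 ?n1" and P': "P' \<in> carrier_mat ?n1 ?n1" and Q': "Q' \<in> carrier_mat ?n1 ?n1" 
    and PQ': "P' * Q' = 1\<^sub>m ?n1" by auto
  let ?P' = "four_block_mat (1\<^sub>m 1) (0\<^sub>m 1 ?n1) (0\<^sub>m ?n1 1) P'"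
  let ?Q' = "four_block_mat (1\<^sub>m 1) (0\<^sub>m 1 ?n1) (0\<^sub>m ?n1 1) Q'"
  define C where "C = four_block_mat A1 (A2 * P') A0 B"
  have A0_eq: "A0 = P' * A0 * 1\<^sub>m 1" unfolding A0id using P' by auto
  have simA'C: "similar_mat_wit A' C ?P' ?Q'" unfolding A'block C_def
    by (rule similar_mat_wit_four_block[OF similar_mat_wit_refl[OF A1] simIH _ A0_eq A1 A3 A0],
    insert PQ' A2 P' Q', auto)
  have ut1: "upper_triangular A1" unfolding A1id by auto
  have ut: "upper_triangular C" unfolding C_def A0id
    by (intro upper_triangular_four_block[OF _ B ut1 ut], auto simp: A1id)
  from A1id have diagA1: "diag_mat A1 = [e]" unfolding diag_mat_def by auto
  from diag_four_block_mat[OF A1 B] have diag: "diag_mat C = e # es" unfolding diag diagA1 C_def by simp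
  have P'c: "?P' \<in> carrier_mat n n" using P' n by auto
  have adjP: "mat_adjoint (W * ?P') = ?Q' * W'"
    unfolding W'adj Q'_def using adj_mult[OF W P'c] adj_four_block[OF P'] by simp
  from ut similar_mat_wit_trans[OF simAA' simA'C] diag adjP
  show ?case by metis
qed

lemma proots_prod_lin: "proots (\<Prod> (e :: complex) \<leftarrow> es. [:- e, 1:]) = mset es"
proof (induct es)
  case (Cons a es)
  have nz: "(\<Prod> (e :: complex) \<leftarrow> es. [:- e, 1:]) \<noteq> 0"
  proof -
    have "monic (\<Prod> (e :: complex) \<leftarrow> es. [:- e, 1:])" by (rule monic_prod_list, auto)
    then show ?thesis by auto
  qed
  have "proots (\<Prod> (e :: complex) \<leftarrow> a # es. [:- e, 1:]) = proots [:-a,1:] + proots (\<Prod> (e :: complex) \<leftarrow> es. [:- e, 1:])"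
    unfolding list.map prod_list.Cons by (rule proots_mult) (auto simp: nz)
  then show ?case using Cons by (simp add: proots_linear_factor)
qed simp

definition dmat :: "nat \<Rightarrow> real list \<Rightarrow> complex mat" where
  "dmat n ds = mat n n (\<lambda>(i,j). if i = j then complex_of_real (ds ! i) else 0)"

lemma massoc: "(A :: complex mat) \<in> carrier_mat n n \<Longrightarrow> B \<in> carrier_mat n n \<Longrightarrow> C \<in> carrier_mat n n \<Longrightarrow> A * B * C = A * (B * C)"
  by (rule assoc_mult_mat)

lemma hermitian_spectral:
  assumes M: "(M::complex mat) \<in> carrier_mat n n" and herm: "mat_adjoint M = M"
  shows "\<exists>U ds. U \<in> carrier_mat n n \<and> mat_adjoint U * U = 1\<^sub>m n \<and> U * mat_adjoint U = 1\<^sub>m n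
     \<and> length ds = n \<and> proots (char_poly M) = mset (map complex_of_real ds)
     \<and> mat_adjoint U * M * U = dmat n ds"
proof -
  obtain es where es: "char_poly M = (\<Prod>a\<leftarrow>es. [:- a, 1:])" "length es = n"
    using char_poly_factorized[OF M] by auto
  obtain B P where sim: "similar_mat_wit M B P (mat_adjoint P)" and ut: "upper_triangular B"
    and dg: "diag_mat B = es"
    using unitary_schur[OF M es(1)] by blast
  from similar_mat_witD2[OF M sim] have B: "B \<in> carrier_mat n n" and P: "P \<in> carrier_mat n n"
    and PQ: "P * mat_adjoint P = 1\<^sub>m n" and QP: "mat_adjoint P * P = 1\<^sub>m n" by auto
  have MB: "M = P * B * mat_adjoint P" using sim unfolding similar_mat_wit_def Let_def by blast
  have Pa: "mat_adjoint P \<in> carrier_mat n n" using P by simp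
  have BM: "mat_adjoint P * M * P = B"
  proof -
    have "mat_adjoint P * M * P = (mat_adjoint P * P) * B * (mat_adjoint P * P)"
      unfolding MB using P B Pa by (simp add: massoc[of _ n] mult_carrier_mat[of _ n n])
    then show ?thesis using QP B by simp
  qed
  have Bh: "mat_adjoint B = B"
  proof -
    have "mat_adjoint B = mat_adjoint (mat_adjoint P * M * P)" using BM by simp
    also have "\<dots> = mat_adjoint P * mat_adjoint M * P"
      using adj_mult[OF mult_carrier_mat[OF Pa M] P] adj_mult[OF Pa M] P M Pa
      by (simp add: massoc[of _ n] mult_carrier_mat[of _ n n])
    finally show ?thesis using herm BM by simp
  qed
  define ds where "ds = map Re es"
  have Bij: "B $$ (i,j) = (if i = j then complex_of_real (ds ! i) else 0)" if "i < n" "j < n" for i j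
  proof -
    have c: "B $$ (i,j) = cnj (B $$ (j,i))" using arg_cong[OF Bh, of "\<lambda>X. X $$ (i,j)"] that B by auto
    show ?thesis
    proof (cases "i = j")
      case True
      then have "Im (B $$ (i,i)) = 0" using c by (metis cnj.simps(2) complex.expand neg_equal_zero cnj.simps(1))
      moreover have "B $$ (i,i) = es ! i" using dg[symmetric] that B by (auto simp: diag_mat_def)
      ultimately show ?thesis using True that es(2) by (simp add: ds_def complex_eq_iff)
    next
      case False
      then have "B $$ (i,j) = 0 \<or> B $$ (j,i) = 0" using ut that B unfolding upper_triangular_def
        by (metis carrier_matD(1) linorder_neqE_nat)
      then show ?thesis using c False by auto
    qed
  qed
  have "B = dmat n ds" using B by (intro eq_matI) (auto simp: dmat_def Bij)
  moreover have "mset es = mset (map complex_of_real ds)"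
  proof -
    have "es = map complex_of_real ds"
    proof (rule nth_equalityI)
      fix i assume "i < length es"
      then show "es ! i = map complex_of_real ds ! i" using Bij[of i i] dg[symmetric] B es(2)
        by (auto simp: diag_mat_def ds_def)
    qed (simp add: ds_def)
    then show ?thesis by simp
  qed
  ultimately show ?thesis using P PQ QP BM es proots_prod_lin[of es]
    by (intro exI[of _ P] exI[of _ ds]) (simp add: ds_def)
qed

lemma rsort_mono: fixes xs :: "real list"
  assumes "i \<le> j" "j < length xs" shows "rev (sort xs) ! j \<le> rev (sort xs) ! i"
proof -
  have "sorted (sort xs)" by simp
  then show ?thesis using assms by (simp add: rev_nth sorted_nth_mono)
qed

lemma filter_len_rsort: "length (filter P xs) = length (filter P (rev (sort xs)))"
proof -
  have "mset (filter P xs) = mset (filter P (rev (sort xs)))" by (simp add: mset_filter)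
  then show ?thesis by (metis size_mset)
qed

lemma top2_list: fixes xs :: "real list"
  assumes len: "length xs \<ge> 2" and L: "L = rev (sort xs)"
  shows "\<forall>x\<in>set xs. x \<le> L ! 0"
    and "length (filter (\<lambda>x. L ! 1 < x) xs) \<le> 1"
    and "length (filter (\<lambda>x. L ! 1 \<le> x) xs) \<ge> 2"
    and "L ! 0 \<in> set xs" "L ! 1 \<le> L ! 0"
proof -
  have lL: "length L = length xs" using L by simp
  have sL: "set L = set xs" using L by simp
  show "\<forall>x\<in>set xs. x \<le> L ! 0"
  proof
    fix x assume "x \<in> set xs"
    then obtain k where k: "k < length L" "x = L ! k" using sL by (metis in_set_conv_nth)
    then show "x \<le> L ! 0" using rsort_mono[of 0 k xs] L lL by auto
  qed
  have "0 < length L" using lL len by linarith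
  then show "L ! 0 \<in> set xs" using sL by (metis nth_mem)
  show "L ! 1 \<le> L ! 0" using rsort_mono[of 0 1 xs] L len by auto
  have "length (filter (\<lambda>x. L ! 1 < x) xs) = card {k. k < length L \<and> L ! 1 < L ! k}"
    using filter_len_rsort[of _ xs] L by (simp add: length_filter_conv_card)
  also have "\<dots> \<le> card {0::nat}"
  proof (rule card_mono)
    show "{k. k < length L \<and> L ! 1 < L ! k} \<subseteq> {0}"
    proof
      fix k assume k: "k \<in> {k. k < length L \<and> L ! 1 < L ! k}"
      show "k \<in> {0}"
      proof (rule ccontr)
        assume "k \<notin> {0}"
        then have "1 \<le> k" by auto
        then show False using rsort_mono[of 1 k xs] L k lL by auto
      qed
    qed
  qed simp
  finally show "length (filter (\<lambda>x. L ! 1 < x) xs) \<le> 1" by simp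
  have "2 = card {0::nat, 1}" by simp
  also have "\<dots> \<le> card {k. k < length L \<and> L ! 1 \<le> L ! k}"
    using rsort_mono[of 0 1 xs] L len lL by (intro card_mono) auto
  also have "\<dots> = length (filter (\<lambda>x. L ! 1 \<le> x) xs)"
    using filter_len_rsort[of _ xs] L by (simp add: length_filter_conv_card)
  finally show "length (filter (\<lambda>x. L ! 1 \<le> x) xs) \<ge> 2" .
qed

lemma weighted_top2: fixes d c :: "nat \<Rightarrow> real"
  assumes da: "\<And>k. k < n \<Longrightarrow> d k \<le> a" and cardS: "card {k. k < n \<and> b < d k} \<le> 1" and ba: "b \<le> a"
    and c0: "\<And>k. k < n \<Longrightarrow> 0 \<le> c k" and c1: "\<And>k. k < n \<Longrightarrow> c k \<le> 1"
    and csum: "(\<Sum>k<n. c k) = 2"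
  shows "(\<Sum>k<n. c k * d k) \<le> a + b"
proof -
  define S where "S = {k. k < n \<and> b < d k}"
  have fS: "finite S" unfolding S_def by auto
  have S: "S \<subseteq> {..<n}" unfolding S_def by auto
  have "(\<Sum>k<n. c k * d k) = (\<Sum>k<n. c k * (d k - b)) + 2 * b"
  proof -
    have "(\<Sum>k<n. c k * (d k - b)) = (\<Sum>k<n. c k * d k) - (\<Sum>k<n. c k) * b"
      by (simp add: right_diff_distrib sum_subtractf sum_distrib_right)
    then show ?thesis using csum by simp
  qed
  also have "(\<Sum>k<n. c k * (d k - b)) \<le> (\<Sum>k\<in>S. c k * (d k - b))"
  proof -
    have "(\<Sum>k<n. c k * (d k - b)) = (\<Sum>k\<in>S. c k * (d k - b)) + (\<Sum>k\<in>{..<n} - S. c k * (d k - b))"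
      using S by (metis (no_types, lifting) finite_lessThan sum.subset_diff add.commute)
    moreover have "(\<Sum>k\<in>{..<n} - S. c k * (d k - b)) \<le> 0"
      by (rule sum_nonpos) (auto simp: S_def c0 mult_nonneg_nonpos)
    ultimately show ?thesis by simp
  qed
  also have "\<dots> \<le> (\<Sum>k\<in>S. (a - b))"
  proof (rule sum_mono)
    fix k assume "k \<in> S"
    then have k: "k < n" "b < d k" unfolding S_def by auto
    have "c k * (d k - b) \<le> 1 * (d k - b)" using k c1[OF k(1)] by (intro mult_right_mono) auto
    also have "\<dots> \<le> a - b" using da[OF k(1)] by simp
    finally show "c k * (d k - b) \<le> a - b" .
  qed
  also have "\<dots> = card S * (a - b)" by simp
  also have "\<dots> \<le> 1 * (a - b)" using cardS ba unfolding S_def by (intro mult_right_mono) auto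
  finally show ?thesis by simp
qed

lemma cdot_sum: "u \<in> carrier_vec n \<Longrightarrow> v \<in> carrier_vec n \<Longrightarrow> u \<bullet>c v = (\<Sum>i<n. u $ i * cnj (v $ i))"
  by (auto simp: scalar_prod_def lessThan_atLeast0)

lemma cnorm_sum: "x \<in> carrier_vec n \<Longrightarrow> x \<bullet>c x = complex_of_real (\<Sum>i<n. (cmod (x $ i))^2)"
  by (simp only: cdot_sum of_real_sum complex_norm_square)

lemma bessel2: assumes w: "w \<in> carrier_vec n" and y: "y \<in> carrier_vec n"
  and ww: "w \<bullet>c w = 1" and yy: "y \<bullet>c y = 1" and wy: "w \<bullet>c y = 0" and k: "k < n"
  shows "(cmod (w $ k))^2 + (cmod (y $ k))^2 \<le> 1"
proof -
  define a where "a = cnj (w $ k)"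
  define b where "b = cnj (y $ k)"
  define z where "z = (\<lambda>i. a * w $ i + b * y $ i)"
  define c where "c = (cmod (w $ k))^2 + (cmod (y $ k))^2"
  have sw: "(\<Sum>i<n. w $ i * cnj (w $ i)) = 1" using ww cdot_sum[OF w w] by simp
  have sy: "(\<Sum>i<n. y $ i * cnj (y $ i)) = 1" using yy cdot_sum[OF y y] by simp
  have swy: "(\<Sum>i<n. w $ i * cnj (y $ i)) = 0" using wy cdot_sum[OF w y] by simp
  have syw: "(\<Sum>i<n. y $ i * cnj (w $ i)) = 0"
  proof -
    have "(\<Sum>i<n. y $ i * cnj (w $ i)) = cnj (\<Sum>i<n. w $ i * cnj (y $ i))"
      by (simp add: mult.commute)
    then show ?thesis using swy by simp
  qed
  have "(\<Sum>i<n. z i * cnj (z i)) = a * cnj a * (\<Sum>i<n. w $ i * cnj (w $ i)) + a * cnj b * (\<Sum>i<n. w $ i * cnj (y $ i))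
      + b * cnj a * (\<Sum>i<n. y $ i * cnj (w $ i)) + b * cnj b * (\<Sum>i<n. y $ i * cnj (y $ i))"
  proof -
    have pt: "z i * cnj (z i) = a * cnj a * (w $ i * cnj (w $ i)) + a * cnj b * (w $ i * cnj (y $ i))
      + b * cnj a * (y $ i * cnj (w $ i)) + b * cnj b * (y $ i * cnj (y $ i))" for i
      unfolding z_def by (simp add: ring_distribs mult_ac)
    show ?thesis unfolding pt by (simp add: sum.distrib sum_distrib_left)
  qed
  also have "\<dots> = a * cnj a + b * cnj b" using sw sy swy syw by simp
  also have "\<dots> = complex_of_real c" unfolding c_def a_def b_def of_real_add complex_norm_square
    by (simp add: mult.commute)
  finally have zz: "(\<Sum>i<n. z i * cnj (z i)) = complex_of_real c" .
  have zk: "z k = complex_of_real c" unfolding z_def a_def b_def c_def of_real_add complex_norm_square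
    by (simp add: mult.commute)
  have "(cmod (z k))^2 \<le> (\<Sum>i<n. (cmod (z i))^2)"
    using k by (intro member_le_sum) auto
  also have "(\<Sum>i<n. (cmod (z i))^2) = c"
  proof -
    have "complex_of_real (\<Sum>i<n. (cmod (z i))^2) = complex_of_real c"
      using zz by (simp only: of_real_sum complex_norm_square)
    then show ?thesis by (simp only: of_real_eq_iff)
  qed
  finally have "(cmod (complex_of_real c))^2 \<le> c" using zk by simp
  moreover have "cmod (complex_of_real c) = c" unfolding norm_of_real c_def by simp
  ultimately have "c^2 \<le> c" by simp
  moreover have "c \<ge> 0" unfolding c_def by simp
  ultimately have "c \<le> 1"
  proof -
    assume h: "c^2 \<le> c" "c \<ge> 0"
    show "c \<le> 1"
    proof (rule ccontr)
      assume "\<not> c \<le> 1"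
      then have "1 * c < c * c" using h by (intro mult_strict_right_mono) auto
      then show False using h by (simp add: power2_eq_square)
    qed
  qed
  then show ?thesis unfolding c_def .
qed

lemma dmat_vec: assumes "w \<in> carrier_vec n" "i < n"
  shows "(dmat n ds *\<^sub>v w) $ i = complex_of_real (ds ! i) * w $ i"
proof -
  have "(dmat n ds *\<^sub>v w) $ i = (\<Sum>j\<in>{0..<n}. dmat n ds $$ (i,j) * w $ j)"
    using assms unfolding mult_mat_vec_def scalar_prod_def dmat_def by auto
  also have "\<dots> = (\<Sum>j\<in>{0..<n}. (if i = j then complex_of_real (ds ! i) * w $ j else 0))"
    using assms by (intro sum.cong) (auto simp: dmat_def)
  also have "\<dots> = complex_of_real (ds ! i) * w $ i" using assms(2) by (simp add: sum.delta)
  finally show ?thesis .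
qed

lemma dmat_carrier[simp]: "dmat n ds \<in> carrier_mat n n"
  unfolding dmat_def by (rule mat_carrier)

lemma dmat_form: assumes "w \<in> carrier_vec n" "length ds = n"
  shows "w \<bullet>c (dmat n ds *\<^sub>v w) = complex_of_real (\<Sum>k<n. ds ! k * (cmod (w $ k))^2)"
proof -
  have c: "dmat n ds *\<^sub>v w \<in> carrier_vec n" by (rule mult_mat_vec_carrier[OF dmat_carrier assms(1)])
  have "w \<bullet>c (dmat n ds *\<^sub>v w) = (\<Sum>k<n. w $ k * cnj (complex_of_real (ds ! k) * w $ k))"
    unfolding cdot_sum[OF assms(1) c] using assms(1)
    by (intro sum.cong) (auto simp: dmat_vec)
  also have "\<dots> = (\<Sum>k<n. complex_of_real (ds ! k * (cmod (w $ k))^2))"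
    unfolding of_real_mult complex_norm_square by (intro sum.cong) (simp_all add: mult_ac)
  also have "\<dots> = complex_of_real (\<Sum>k<n. ds ! k * (cmod (w $ k))^2)"
    by (simp only: of_real_sum)
  finally show ?thesis .
qed

lemma unit_pres: assumes U: "(U::complex mat) \<in> carrier_mat n n" and UU: "U * mat_adjoint U = 1\<^sub>m n"
  and x: "x \<in> carrier_vec n" and z: "z \<in> carrier_vec n"
  shows "(mat_adjoint U *\<^sub>v x) \<bullet>c (mat_adjoint U *\<^sub>v z) = x \<bullet>c z"
proof -
  have Ua: "mat_adjoint U \<in> carrier_mat n n" using U by simp
  have "(mat_adjoint U *\<^sub>v x) \<bullet>c (mat_adjoint U *\<^sub>v z) = x \<bullet>c (U *\<^sub>v (mat_adjoint U *\<^sub>v z))"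
    using adj_vec[OF Ua x mult_mat_vec_carrier[OF Ua z]] by simp
  also have "U *\<^sub>v (mat_adjoint U *\<^sub>v z) = z"
    using assoc_mult_mat_vec[OF U Ua z] UU z by simp
  finally show ?thesis .
qed

lemma adjU_col: assumes U: "(U::complex mat) \<in> carrier_mat n n" and UU: "mat_adjoint U * U = 1\<^sub>m n"
  and i: "i < n" shows "mat_adjoint U *\<^sub>v col U i = unit_vec n i"
proof -
  have "mat_adjoint U *\<^sub>v col U i = col (mat_adjoint U * U) i"
    using col_mult2[OF adj_carrier[OF U] U i] by simp
  then show ?thesis using UU i by simp
qed

lemma sum_unit: "k < n \<Longrightarrow> (\<Sum>i<n. f i * (cmod (unit_vec n k $ i))^2) = (f k :: real)"
proof -
  assume k: "k < n"
  have "(\<Sum>i<n. f i * (cmod (unit_vec n k $ i))^2) = (\<Sum>i<n. if i = k then f k else 0)"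
    by (intro sum.cong) (auto simp: unit_vec_def)
  also have "\<dots> = f k" using k by simp
  finally show ?thesis .
qed

lemma sv_data: assumes X: "(X::complex mat) \<in> carrier_mat n n"
  shows "\<exists>U ds. U \<in> carrier_mat n n \<and> mat_adjoint U * U = 1\<^sub>m n \<and> U * mat_adjoint U = 1\<^sub>m n
     \<and> length ds = n \<and> (\<forall>k<n. ds ! k \<ge> 0) \<and> singular_values X = rev (sort (map sqrt ds))
     \<and> (\<forall>x \<in> carrier_vec n. (X *\<^sub>v x) \<bullet>c (X *\<^sub>v x) = complex_of_real (\<Sum>k<n. ds ! k * (cmod ((mat_adjoint U *\<^sub>v x) $ k))^2))"
proof -
  define M where "M = mat_adjoint X * X"
  have Xa: "mat_adjoint X \<in> carrier_mat n n" using X by simp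
  have M: "M \<in> carrier_mat n n" unfolding M_def using mult_carrier_mat[OF Xa X] .
  have Mh: "mat_adjoint M = M" unfolding M_def using adj_mult[OF Xa X] by simp
  obtain U ds where U: "U \<in> carrier_mat n n" and UU1: "mat_adjoint U * U = 1\<^sub>m n"
    and UU2: "U * mat_adjoint U = 1\<^sub>m n" and len: "length ds = n"
    and pr: "proots (char_poly M) = mset (map complex_of_real ds)"
    and D: "mat_adjoint U * M * U = dmat n ds"
    using hermitian_spectral[OF M Mh] by blast
  have Ua: "mat_adjoint U \<in> carrier_mat n n" using U by simp
  have MD: "M = U * dmat n ds * mat_adjoint U"
  proof -
    have "U * dmat n ds * mat_adjoint U = (U * mat_adjoint U) * M * (U * mat_adjoint U)"
      unfolding D[symmetric] using U Ua M by (simp add: massoc[of _ n] mult_carrier_mat[of _ n n])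
    then show ?thesis using UU2 M by simp
  qed
  have qf: "(X *\<^sub>v x) \<bullet>c (X *\<^sub>v x) = complex_of_real (\<Sum>k<n. ds ! k * (cmod ((mat_adjoint U *\<^sub>v x) $ k))^2)"
    if x: "x \<in> carrier_vec n" for x
  proof -
    have Xx: "X *\<^sub>v x \<in> carrier_vec n" using X x by simp
    have w: "mat_adjoint U *\<^sub>v x \<in> carrier_vec n" using Ua x by simp
    have Dw: "dmat n ds *\<^sub>v (mat_adjoint U *\<^sub>v x) \<in> carrier_vec n" by (rule mult_mat_vec_carrier[OF dmat_carrier w])
    have "(X *\<^sub>v x) \<bullet>c (X *\<^sub>v x) = x \<bullet>c (mat_adjoint X *\<^sub>v (X *\<^sub>v x))"
      by (rule adj_vec[OF X x Xx])
    also have "mat_adjoint X *\<^sub>v (X *\<^sub>v x) = M *\<^sub>v x"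
      unfolding M_def using assoc_mult_mat_vec[OF Xa X x] by simp
    also have "M *\<^sub>v x = U *\<^sub>v (dmat n ds *\<^sub>v (mat_adjoint U *\<^sub>v x))"
      unfolding MD using U Ua x w
      by (simp add: assoc_mult_mat_vec[of _ n n _ n] mult_carrier_mat[of _ n n] assoc_mult_mat_vec[OF U dmat_carrier w])
    also have "x \<bullet>c (U *\<^sub>v (dmat n ds *\<^sub>v (mat_adjoint U *\<^sub>v x))) =
      (mat_adjoint U *\<^sub>v x) \<bullet>c (dmat n ds *\<^sub>v (mat_adjoint U *\<^sub>v x))"
      using adj_vec[OF Ua x Dw] by simp
    also have "\<dots> = complex_of_real (\<Sum>k<n. ds ! k * (cmod ((mat_adjoint U *\<^sub>v x) $ k))^2)"
      by (rule dmat_form[OF w len])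
    finally show ?thesis .
  qed
  have nn: "ds ! k \<ge> 0" if k: "k < n" for k
  proof -
    have c: "col U k \<in> carrier_vec n" using U by (metis carrier_matD(1) carrier_vecI col_dim)
    have "(X *\<^sub>v col U k) \<bullet>c (X *\<^sub>v col U k) = complex_of_real (ds ! k)"
      using qf[OF c] adjU_col[OF U UU1 k] sum_unit[OF k, of "\<lambda>i. ds ! i"] by simp
    moreover have "(X *\<^sub>v col U k) \<bullet>c (X *\<^sub>v col U k) = complex_of_real (\<Sum>i<n. (cmod ((X *\<^sub>v col U k) $ i))^2)"
      using X c by (intro cnorm_sum) simp
    ultimately have "ds ! k = (\<Sum>i<n. (cmod ((X *\<^sub>v col U k) $ i))^2)" by (simp only: of_real_eq_iff)
    then show ?thesis by (simp add: sum_nonneg)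
  qed
  have sv: "singular_values X = rev (sort (map sqrt ds))"
    unfolding singular_values_def M_def[symmetric] pr
  proof -
    have "image_mset (\<lambda>z. sqrt (Re z)) (mset (map complex_of_real ds)) = mset (map sqrt ds)"
      by (simp only: mset_map[symmetric] map_map o_def Re_complex_of_real)
    then show "rev (sorted_list_of_multiset (image_mset (\<lambda>z. sqrt (Re z)) (mset (map complex_of_real ds)))) = rev (sort (map sqrt ds))"
      by (simp only: sorted_list_of_multiset_mset)
  qed
  show ?thesis using U UU1 UU2 len nn sv qf by blast
qed

lemma unit_cdot: "i < n \<Longrightarrow> j < n \<Longrightarrow> unit_vec n i \<bullet>c unit_vec n j = (if i = j then 1 else (0::complex))"
proof -
  assume ij: "i < n" "j < n"
  have "unit_vec n i \<bullet>c unit_vec n j = (\<Sum>k<n. unit_vec n i $ k * cnj (unit_vec n j $ k))"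
    by (rule cdot_sum) auto
  also have "\<dots> = (\<Sum>k<n. if k = i then (if i = j then 1 else 0) else 0)"
    by (intro sum.cong) (auto simp: unit_vec_def)
  also have "\<dots> = (if i = j then 1 else 0)" using ij by simp
  finally show ?thesis .
qed

lemma sq_sqrt_le: "(0::real) \<le> a \<Longrightarrow> 0 \<le> d \<Longrightarrow> a^2 < d \<longleftrightarrow> a < sqrt d"
  by (metis real_sqrt_less_iff real_sqrt_abs abs_of_nonneg)

lemma kyfan:
  assumes X: "(X::complex mat) \<in> carrier_mat n n" and n2: "2 \<le> n"
  shows "\<exists>u v. u \<in> carrier_vec n \<and> v \<in> carrier_vec n \<and> u \<bullet>c u = 1 \<and> v \<bullet>c v = 1 \<and> u \<bullet>c v = 0 \<and>
      (sigma X 1)^2 + (sigma X 2)^2 \<le> Re ((X *\<^sub>v u) \<bullet>c (X *\<^sub>v u)) + Re ((X *\<^sub>v v) \<bullet>c (X *\<^sub>v v))"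
    and "\<And>u v. u \<in> carrier_vec n \<Longrightarrow> v \<in> carrier_vec n \<Longrightarrow> u \<bullet>c u = 1 \<Longrightarrow> v \<bullet>c v = 1 \<Longrightarrow> u \<bullet>c v = 0 \<Longrightarrow>
      Re ((X *\<^sub>v u) \<bullet>c (X *\<^sub>v u)) + Re ((X *\<^sub>v v) \<bullet>c (X *\<^sub>v v)) \<le> (sigma X 1)^2 + (sigma X 2)^2"
proof -
  obtain U ds where U: "U \<in> carrier_mat n n" and UU1: "mat_adjoint U * U = 1\<^sub>m n"
    and UU2: "U * mat_adjoint U = 1\<^sub>m n" and len: "length ds = n" and nn: "\<forall>k<n. ds ! k \<ge> 0"
    and sv: "singular_values X = rev (sort (map sqrt ds))"
    and qf: "\<forall>x \<in> carrier_vec n. (X *\<^sub>v x) \<bullet>c (X *\<^sub>v x) = complex_of_real (\<Sum>k<n. ds ! k * (cmod ((mat_adjoint U *\<^sub>v x) $ k))^2)"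
    using sv_data[OF X] by blast
  have Ua: "mat_adjoint U \<in> carrier_mat n n" using U by simp
  define xs where "xs = map sqrt ds"
  define L where "L = singular_values X"
  have L: "L = rev (sort xs)" unfolding L_def sv xs_def ..
  have lxs: "length xs \<ge> 2" using len n2 unfolding xs_def by simp
  note T = top2_list[OF lxs L]
  have s1: "sigma X 1 = L ! 0" and s2: "sigma X 2 = L ! 1" unfolding sigma_def L_def by simp_all
  have xsk: "xs ! k = sqrt (ds ! k)" if "k < n" for k using that len unfolding xs_def by simp
  have lenL: "length L = n" using L len unfolding xs_def by simp
  have setL: "set L = set xs" using L by simp
  have L1nn: "L ! 1 \<ge> 0"
  proof -
    have "L ! 1 \<in> set xs" using setL lenL n2 by (metis nth_mem less_le_trans one_less_numeral_iff semiring_norm(76))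
    then show ?thesis unfolding xs_def using nn len by (auto simp: in_set_conv_nth)
  qed
  have L0: "L ! 1 \<le> L ! 0" using T(5) .
  have qfr: "Re ((X *\<^sub>v x) \<bullet>c (X *\<^sub>v x)) = (\<Sum>k<n. ds ! k * (cmod ((mat_adjoint U *\<^sub>v x) $ k))^2)"
    if "x \<in> carrier_vec n" for x using qf that by simp
  have dsq: "(sqrt (ds ! k))^2 = ds ! k" if "k < n" for k using nn that by simp
  show "\<exists>u v. u \<in> carrier_vec n \<and> v \<in> carrier_vec n \<and> u \<bullet>c u = 1 \<and> v \<bullet>c v = 1 \<and> u \<bullet>c v = 0 \<and>
      (sigma X 1)^2 + (sigma X 2)^2 \<le> Re ((X *\<^sub>v u) \<bullet>c (X *\<^sub>v u)) + Re ((X *\<^sub>v v) \<bullet>c (X *\<^sub>v v))"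
  proof -
    obtain i where i: "i < n" "L ! 0 = sqrt (ds ! i)"
      using T(4) len unfolding xs_def by (auto simp: in_set_conv_nth)
    define J where "J = {k. k < n \<and> L ! 1 \<le> sqrt (ds ! k)}"
    have "card J \<ge> 2"
    proof -
      have "{i. i < n \<and> L ! 1 \<le> map sqrt ds ! i} = J" unfolding J_def using len by auto
      then show ?thesis using T(3) len unfolding length_filter_conv_card xs_def by simp
    qed
    then obtain j where j: "j \<in> J" "j \<noteq> i"
    proof -
      assume h: "\<And>j. j \<in> J \<Longrightarrow> j \<noteq> i \<Longrightarrow> thesis"
      show thesis
      proof (rule ccontr)
        assume "\<not> thesis"
        then have "J \<subseteq> {i}" using h by auto
        then have "card J \<le> card {i}" by (intro card_mono) auto
        then have "card J \<le> 1" by simp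
        then show False using \<open>card J \<ge> 2\<close> by simp
      qed
    qed
    have jn: "j < n" and jL: "L ! 1 \<le> sqrt (ds ! j)" using j unfolding J_def by auto
    define u where "u = col U i"
    define v where "v = col U j"
    have uc: "u \<in> carrier_vec n" unfolding u_def using U by (metis carrier_matD(1) carrier_vecI col_dim)
    have vc: "v \<in> carrier_vec n" unfolding v_def using U by (metis carrier_matD(1) carrier_vecI col_dim)
    have au: "mat_adjoint U *\<^sub>v u = unit_vec n i" unfolding u_def by (rule adjU_col[OF U UU1 i(1)])
    have av: "mat_adjoint U *\<^sub>v v = unit_vec n j" unfolding v_def by (rule adjU_col[OF U UU1 jn])
    have uu: "u \<bullet>c u = 1" using unit_pres[OF U UU2 uc uc] au unit_cdot[OF i(1) i(1)] by simp
    have vv: "v \<bullet>c v = 1" using unit_pres[OF U UU2 vc vc] av unit_cdot[OF jn jn] by simp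
    have uv: "u \<bullet>c v = 0" using unit_pres[OF U UU2 uc vc] au av unit_cdot[OF i(1) jn] j(2) by simp
    have qu: "Re ((X *\<^sub>v u) \<bullet>c (X *\<^sub>v u)) = ds ! i" using qfr[OF uc] au sum_unit[OF i(1), of "\<lambda>k. ds ! k"] by simp
    have qv: "Re ((X *\<^sub>v v) \<bullet>c (X *\<^sub>v v)) = ds ! j" using qfr[OF vc] av sum_unit[OF jn, of "\<lambda>k. ds ! k"] by simp
    have "(sigma X 1)^2 = ds ! i" using s1 i dsq by simp
    moreover have "(sigma X 2)^2 \<le> ds ! j"
    proof -
      have "(L ! 1)^2 \<le> (sqrt (ds ! j))^2" using jL L1nn by (intro power_mono) auto
      then show ?thesis using s2 dsq[OF jn] by simp
    qed
    ultimately show ?thesis using uc vc uu vv uv qu qv by (intro exI[of _ u] exI[of _ v]) auto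
  qed
  fix u v :: "complex vec" assume uc: "u \<in> carrier_vec n" and vc: "v \<in> carrier_vec n" and uu: "u \<bullet>c u = 1"
    and vv: "v \<bullet>c v = 1" and uv: "u \<bullet>c v = 0"
  define w where "w = mat_adjoint U *\<^sub>v u"
  define y where "y = mat_adjoint U *\<^sub>v v"
  have wc: "w \<in> carrier_vec n" unfolding w_def using Ua uc by simp
  have yc: "y \<in> carrier_vec n" unfolding y_def using Ua vc by simp
  have ww: "w \<bullet>c w = 1" unfolding w_def using unit_pres[OF U UU2 uc uc] uu by simp
  have yy: "y \<bullet>c y = 1" unfolding y_def using unit_pres[OF U UU2 vc vc] vv by simp
  have wy: "w \<bullet>c y = 0" unfolding w_def y_def using unit_pres[OF U UU2 uc vc] uv by simp
  define c where "c = (\<lambda>k. (cmod (w $ k))^2 + (cmod (y $ k))^2)"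
  have sw: "(\<Sum>k<n. (cmod (w $ k))^2) = 1"
  proof -
    have "complex_of_real (\<Sum>k<n. (cmod (w $ k))^2) = 1" using cnorm_sum[OF wc] ww by (simp only:)
    then show ?thesis by (simp only: of_real_eq_1_iff)
  qed
  have sy: "(\<Sum>k<n. (cmod (y $ k))^2) = 1"
  proof -
    have "complex_of_real (\<Sum>k<n. (cmod (y $ k))^2) = 1" using cnorm_sum[OF yc] yy by (simp only:)
    then show ?thesis by (simp only: of_real_eq_1_iff)
  qed
  have "Re ((X *\<^sub>v u) \<bullet>c (X *\<^sub>v u)) + Re ((X *\<^sub>v v) \<bullet>c (X *\<^sub>v v)) = (\<Sum>k<n. c k * ds ! k)"
    unfolding qfr[OF uc] qfr[OF vc] c_def w_def[symmetric] y_def[symmetric]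
    by (simp only: sum.distrib[symmetric]) (intro sum.cong, auto simp: algebra_simps)
  also have "\<dots> \<le> (L ! 0)^2 + (L ! 1)^2"
  proof (rule weighted_top2)
    fix k assume k: "k < n"
    have "sqrt (ds ! k) \<le> L ! 0" using T(1) xsk[OF k] len k unfolding xs_def by (metis length_map nth_mem)
    then have "(sqrt (ds ! k))^2 \<le> (L ! 0)^2" using nn k by (intro power_mono) auto
    then show "ds ! k \<le> (L ! 0)^2" using dsq[OF k] by simp
  next
    have "{k. k < n \<and> (L ! 1)^2 < ds ! k} = {k. k < length xs \<and> L ! 1 < xs ! k}"
      using sq_sqrt_le[OF L1nn] nn xsk len unfolding xs_def by auto
    then show "card {k. k < n \<and> (L ! 1)^2 < ds ! k} \<le> 1" using T(2) by (simp add: length_filter_conv_card)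
  next
    show "(L ! 1)^2 \<le> (L ! 0)^2" using L0 L1nn by (intro power_mono) auto
  next
    fix k assume k: "k < n"
    show "0 \<le> c k" unfolding c_def by simp
    show "c k \<le> 1" unfolding c_def by (rule bessel2[OF wc yc ww yy wy k])
  next
    show "(\<Sum>k<n. c k) = 2" unfolding c_def using sw sy by (simp add: sum.distrib)
  qed
  finally show "Re ((X *\<^sub>v u) \<bullet>c (X *\<^sub>v u)) + Re ((X *\<^sub>v v) \<bullet>c (X *\<^sub>v v)) \<le> (sigma X 1)^2 + (sigma X 2)^2"
    using s1 s2 by simp
qed

lemma mat_tr_cyc: assumes X: "(X::complex mat) \<in> carrier_mat n m" and Y: "Y \<in> carrier_mat m n"
  shows "mat_tr (X * Y) = mat_tr (Y * X)"
proof -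
  have "mat_tr (X * Y) = (\<Sum>i<n. \<Sum>k<m. X $$ (i,k) * Y $$ (k,i))"
    using X Y by (simp add: mat_tr_def scalar_prod_def lessThan_atLeast0)
  also have "\<dots> = (\<Sum>k<m. \<Sum>i<n. Y $$ (k,i) * X $$ (i,k))"
    by (subst sum.swap) (simp add: mult.commute)
  also have "\<dots> = mat_tr (Y * X)"
    using X Y by (simp add: mat_tr_def scalar_prod_def lessThan_atLeast0)
  finally show ?thesis .
qed

lemma mat_tr_lin: assumes X: "(X::complex mat) \<in> carrier_mat n n" and Y: "Y \<in> carrier_mat n n"
  shows "mat_tr (c \<cdot>\<^sub>m (X + d \<cdot>\<^sub>m Y)) = c * (mat_tr X + d * mat_tr Y)"
  using X Y by (simp add: mat_tr_def sum_distrib_left sum.distrib algebra_simps)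

lemma dmat_dims[simp]: "dim_row (dmat n ds) = n" "dim_col (dmat n ds) = n"
  using dmat_carrier[of n ds] by (metis carrier_matD(1), metis carrier_matD(2))

lemma dmat_index: "i < n \<Longrightarrow> j < n \<Longrightarrow> dmat n ds $$ (i,j) = (if i = j then complex_of_real (ds ! i) else 0)"
  unfolding dmat_def by simp

definition dls :: "real list" where "dls = [0, 1, 2, -3]"

lemma dls_distinct: "i < 4 \<Longrightarrow> j < 4 \<Longrightarrow> i \<noteq> j \<Longrightarrow> dls ! i \<noteq> dls ! j"
proof -
  assume h: "i < 4" "j < 4" "i \<noteq> j"
  then have "i = 0 \<or> i = 1 \<or> i = 2 \<or> i = 3" "j = 0 \<or> j = 1 \<or> j = 2 \<or> j = 3" by arith+
  then show ?thesis using h(3) unfolding dls_def by (elim disjE) simp_all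
qed

lemma dls_tr: "mat_tr (dmat 4 dls) = 0"
proof -
  have "mat_tr (dmat 4 dls) = (\<Sum>i<4. complex_of_real (dls ! i))"
    unfolding mat_tr_def using dmat_carrier[of 4 dls] by (intro sum.cong) (auto simp: dmat_index)
  also have "\<dots> = 0" by (simp add: dls_def numeral_eq_Suc)
  finally show ?thesis .
qed

lemma eigen_set_ut: assumes S: "(S::complex mat) \<in> carrier_mat n n" and ut: "upper_triangular S"
  and sim: "similar_mat A S" and A: "A \<in> carrier_mat n n"
  shows "{z. eigenvalue A z} = set (diag_mat S)"
proof -
  have "eigenvalue A z \<longleftrightarrow> z \<in> set (diag_mat S)" for z
  proof -
    have "eigenvalue A z \<longleftrightarrow> poly (char_poly A) z = 0" by (rule eigenvalue_root_char_poly[OF A])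
    also have "char_poly A = char_poly S" by (rule char_poly_similar[OF sim])
    also have "char_poly S = (\<Prod>a\<leftarrow>diag_mat S. [:- a, 1:])" by (rule char_poly_upper_triangular[OF S ut])
    also have "poly (\<Prod>a\<leftarrow>diag_mat S. [:- a, 1:]) z = prod_list (map (\<lambda>a. z - a) (diag_mat S))"
      by (simp add: poly_prod_list o_def)
    also have "\<dots> = 0 \<longleftrightarrow> z \<in> set (diag_mat S)" by (simp add: prod_list_zero_iff image_iff)
    finally show ?thesis .
  qed
  then show ?thesis by auto
qed

lemma perturb_one: assumes A: "(A::complex mat) \<in> carrier_mat 4 4"
  shows "\<exists>D. D \<in> carrier_mat 4 4 \<and> mat_tr D = 0 \<and>
    eventually (\<lambda>e. \<forall>c. c \<noteq> 0 \<longrightarrow> card {z. eigenvalue (c \<cdot>\<^sub>m (A + complex_of_real e \<cdot>\<^sub>m D)) z} = 4) (at (0::real))"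
proof -
  obtain es where es: "char_poly A = (\<Prod>a\<leftarrow>es. [:- a, 1:])"
    using char_poly_factorized[OF A] by auto
  obtain T P where sim: "similar_mat_wit A T P (mat_adjoint P)" and ut: "upper_triangular T"
    using unitary_schur[OF A es] by blast
  define Q where "Q = mat_adjoint P"
  from similar_mat_witD2[OF A sim[folded Q_def]] have T: "T \<in> carrier_mat 4 4" and P: "P \<in> carrier_mat 4 4"
    and Q: "Q \<in> carrier_mat 4 4" and PQ: "P * Q = 1\<^sub>m 4" and QP: "Q * P = 1\<^sub>m 4" by auto
  have APTQ: "A = P * T * Q" using sim[folded Q_def] unfolding similar_mat_wit_def Let_def by blast
  define Dl where "Dl = dmat 4 dls"
  have Dl: "Dl \<in> carrier_mat 4 4" unfolding Dl_def by simp
  define D where "D = P * Dl * Q"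
  have D: "D \<in> carrier_mat 4 4" unfolding D_def using P Dl Q by simp
  have trD: "mat_tr D = 0"
  proof -
    have "mat_tr D = mat_tr (Q * (P * Dl))" unfolding D_def
      by (rule mat_tr_cyc[OF mult_carrier_mat[OF P Dl] Q])
    also have "Q * (P * Dl) = Dl" using assoc_mult_mat[OF Q P Dl, symmetric] QP Dl by simp
    finally show ?thesis using dls_tr unfolding Dl_def by simp
  qed
  define S where "S = (\<lambda>c e. c \<cdot>\<^sub>m (T + complex_of_real e \<cdot>\<^sub>m Dl))"
  have Sc: "S c e \<in> carrier_mat 4 4" for c e unfolding S_def using T Dl by simp
  have simS: "similar_mat (c \<cdot>\<^sub>m (A + complex_of_real e \<cdot>\<^sub>m D)) (S c e)" for c e
  proof -
    have "P * S c e * Q = c \<cdot>\<^sub>m (A + complex_of_real e \<cdot>\<^sub>m D)"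
    proof -
      have "P * S c e * Q = (c \<cdot>\<^sub>m (P * (T + complex_of_real e \<cdot>\<^sub>m Dl))) * Q"
        unfolding S_def using mult_smult_distrib[OF P, of "T + complex_of_real e \<cdot>\<^sub>m Dl" 4] T Dl by simp
      also have "\<dots> = c \<cdot>\<^sub>m (P * (T + complex_of_real e \<cdot>\<^sub>m Dl) * Q)"
        using mult_smult_assoc_mat[of "P * (T + complex_of_real e \<cdot>\<^sub>m Dl)" 4 4 Q 4] P T Dl Q by simp
      also have "P * (T + complex_of_real e \<cdot>\<^sub>m Dl) = P * T + complex_of_real e \<cdot>\<^sub>m (P * Dl)"
        using mult_add_distrib_mat[OF P T, of "complex_of_real e \<cdot>\<^sub>m Dl"] mult_smult_distrib[OF P Dl] Dl by simp
      also have "(P * T + complex_of_real e \<cdot>\<^sub>m (P * Dl)) * Q = P * T * Q + complex_of_real e \<cdot>\<^sub>m (P * Dl * Q)"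
        using add_mult_distrib_mat[of "P * T" 4 4 "complex_of_real e \<cdot>\<^sub>m (P * Dl)" Q 4]
          mult_smult_assoc_mat[of "P * Dl" 4 4 Q 4] P T Dl Q by simp
      finally show ?thesis unfolding APTQ D_def .
    qed
    then show ?thesis using P Q PQ QP Sc A D
      by (intro similar_matI[of _ _ P Q 4]) auto
  qed
  have utS: "upper_triangular (S c e)" for c e
  proof (rule upper_triangularI)
    fix i j assume ij: "j < i" "i < dim_row (S c e)"
    then have "i < 4" "j < 4" using Sc[of c e] by auto
    moreover have "T $$ (i,j) = 0" using ut ij Sc[of c e] T by (auto simp: upper_triangular_def)
    ultimately show "S c e $$ (i,j) = 0" unfolding S_def Dl_def using T ij by (simp add: dmat_index)
  qed
  have diagS: "diag_mat (S c e) = map (\<lambda>i. c * (T $$ (i,i) + complex_of_real e * complex_of_real (dls ! i))) [0..<4]" for c e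
    unfolding diag_mat_def S_def Dl_def using T by (intro map_cong) (auto simp: dmat_index)
  define bad where "bad = (\<lambda>i j. Re (T $$ (j,j) - T $$ (i,i)) / (dls ! i - dls ! j))"
  have ev: "eventually (\<lambda>e. \<forall>i\<in>{..<4}. \<forall>j\<in>{..<4}. e \<noteq> bad i j) (at (0::real))"
    by (intro eventually_ball_finite ballI) (auto intro: eventually_neq_at_within)
  have "eventually (\<lambda>e. \<forall>c. c \<noteq> 0 \<longrightarrow> card {z. eigenvalue (c \<cdot>\<^sub>m (A + complex_of_real e \<cdot>\<^sub>m D)) z} = 4) (at (0::real))"
  proof (rule eventually_mono[OF ev], intro allI impI)
    fix e :: real and c :: complex
    assume e: "\<forall>i\<in>{..<4}. \<forall>j\<in>{..<4}. e \<noteq> bad i j" and c: "c \<noteq> 0"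
    have Ac: "c \<cdot>\<^sub>m (A + complex_of_real e \<cdot>\<^sub>m D) \<in> carrier_mat 4 4" using A D by simp
    have eq: "{z. eigenvalue (c \<cdot>\<^sub>m (A + complex_of_real e \<cdot>\<^sub>m D)) z} = set (diag_mat (S c e))"
      by (rule eigen_set_ut[OF Sc utS simS Ac])
    have dist: "distinct (diag_mat (S c e))"
      unfolding diagS distinct_conv_nth
    proof (intro allI impI)
      fix i j assume i: "i < length (map (\<lambda>i. c * (T $$ (i,i) + complex_of_real e * complex_of_real (dls ! i))) [0..<4])"
        and j: "j < length (map (\<lambda>i. c * (T $$ (i,i) + complex_of_real e * complex_of_real (dls ! i))) [0..<4])"
        and ij: "i \<noteq> j"
      have i4: "i < 4" and j4: "j < 4" using i j by auto
      have dd: "dls ! i - dls ! j \<noteq> 0" using dls_distinct[OF i4 j4 ij] by simp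
      show "map (\<lambda>i. c * (T $$ (i,i) + complex_of_real e * complex_of_real (dls ! i))) [0..<4] ! i \<noteq>
            map (\<lambda>i. c * (T $$ (i,i) + complex_of_real e * complex_of_real (dls ! i))) [0..<4] ! j"
      proof
        assume "map (\<lambda>i. c * (T $$ (i,i) + complex_of_real e * complex_of_real (dls ! i))) [0..<4] ! i =
            map (\<lambda>i. c * (T $$ (i,i) + complex_of_real e * complex_of_real (dls ! i))) [0..<4] ! j"
        then have "c * (T $$ (i,i) + complex_of_real e * complex_of_real (dls ! i)) = c * (T $$ (j,j) + complex_of_real e * complex_of_real (dls ! j))"
          using i4 j4 by simp
        then have "T $$ (i,i) + complex_of_real e * complex_of_real (dls ! i) = T $$ (j,j) + complex_of_real e * complex_of_real (dls ! j)"
          using c by simp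
        then have "Re (T $$ (i,i)) + e * dls ! i = Re (T $$ (j,j)) + e * dls ! j"
          by (metis Re_complex_of_real of_real_mult plus_complex.sel(1))
        then have "e * (dls ! i - dls ! j) = Re (T $$ (j,j) - T $$ (i,i))" by (simp add: algebra_simps)
        then have "e = bad i j" unfolding bad_def using dd by (simp add: field_simps)
        then show False using e i4 j4 by auto
      qed
    qed
    show "card {z. eigenvalue (c \<cdot>\<^sub>m (A + complex_of_real e \<cdot>\<^sub>m D)) z} = 4"
      unfolding eq using distinct_card[OF dist] diagS by simp
  qed
  then show ?thesis using D trD by blast
qed

definition KK :: "complex mat \<Rightarrow> complex mat \<Rightarrow> complex mat" where
  "KK A B = kron A (1\<^sub>m 4) + kron (1\<^sub>m 4) B"

lemma phi_KK: "phi A B = (sigma (KK A B) 1)^2 + (sigma (KK A B) 2)^2"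
  unfolding phi_def KK_def Let_def ..

lemma KK_carrier: "A \<in> carrier_mat 4 4 \<Longrightarrow> B \<in> carrier_mat 4 4 \<Longrightarrow> KK A B \<in> carrier_mat 16 16"
  unfolding KK_def kron_def by auto

lemma KK_entry: assumes A: "A \<in> carrier_mat 4 4" and B: "B \<in> carrier_mat 4 4" and p: "p < 16" and q: "q < 16"
  shows "KK A B $$ (p,q) = A $$ (p div 4, q div 4) * (if p mod 4 = q mod 4 then 1 else 0)
     + (if p div 4 = q div 4 then 1 else 0) * B $$ (p mod 4, q mod 4)"
proof -
  have "p div 4 < 4" "q div 4 < 4" "p mod 4 < 4" "q mod 4 < 4" using p q by auto
  then show ?thesis unfolding KK_def kron_def using A B p q by simp
qed

lemma KK_lin: assumes A: "A \<in> carrier_mat 4 4" and B: "B \<in> carrier_mat 4 4"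
  and DA: "DA \<in> carrier_mat 4 4" and DB: "DB \<in> carrier_mat 4 4" and p: "p < 16" and q: "q < 16"
  shows "KK (c \<cdot>\<^sub>m (A + e \<cdot>\<^sub>m DA)) (c \<cdot>\<^sub>m (B + e \<cdot>\<^sub>m DB)) $$ (p,q) = c * (KK A B $$ (p,q) + e * KK DA DB $$ (p,q))"
proof -
  have h: "p div 4 < 4" "q div 4 < 4" "p mod 4 < 4" "q mod 4 < 4" using p q by auto
  have A': "c \<cdot>\<^sub>m (A + e \<cdot>\<^sub>m DA) \<in> carrier_mat 4 4" and B': "c \<cdot>\<^sub>m (B + e \<cdot>\<^sub>m DB) \<in> carrier_mat 4 4"
    using A B DA DB by auto
  show ?thesis unfolding KK_entry[OF A' B' p q] KK_entry[OF A B p q] KK_entry[OF DA DB p q]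
    using h A B DA DB by (simp add: algebra_simps)
qed

lemma qf_sum: assumes K: "(K::complex mat) \<in> carrier_mat n n" and u: "u \<in> carrier_vec n"
  shows "Re ((K *\<^sub>v u) \<bullet>c (K *\<^sub>v u)) = (\<Sum>p<n. (cmod (\<Sum>q<n. K $$ (p,q) * u $ q))^2)"
proof -
  have Ku: "K *\<^sub>v u \<in> carrier_vec n" using K u by simp
  have e: "(K *\<^sub>v u) $ p = (\<Sum>q<n. K $$ (p,q) * u $ q)" if "p < n" for p
    using K u that by (simp add: scalar_prod_def lessThan_atLeast0)
  show ?thesis unfolding cnorm_sum[OF Ku] Re_complex_of_real using e by simp
qed

lemma frob_sq: assumes M: "M \<in> carrier_mat n m"
  shows "(frob_norm M)^2 = (\<Sum>j<m. \<Sum>i<n. (cmod (M $$ (i,j)))^2)"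
proof -
  have "mat_tr (mat_adjoint M * M) = (\<Sum>j<m. \<Sum>i<n. M $$ (i,j) * cnj (M $$ (i,j)))"
    unfolding mat_tr_def using M by (auto simp: scalar_prod_def lessThan_atLeast0 mult.commute intro!: sum.cong)
  also have "\<dots> = complex_of_real (\<Sum>j<m. \<Sum>i<n. (cmod (M $$ (i,j)))^2)"
    by (simp only: of_real_sum complex_norm_square)
  finally have "Re (mat_tr (mat_adjoint M * M)) = (\<Sum>j<m. \<Sum>i<n. (cmod (M $$ (i,j)))^2)" by simp
  moreover have "(\<Sum>j<m. \<Sum>i<n. (cmod (M $$ (i,j)))^2) \<ge> 0" by (intro sum_nonneg) auto
  ultimately show ?thesis unfolding frob_norm_def by simp
qed

lemma main_back:
  assumes hY: "\<forall>(A, B) \<in> calY. phi A B \<le> 1/2" and AB: "(A, B) \<in> calX"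
  shows "phi A B \<le> 1/2"
proof (rule ccontr)
  assume "\<not> phi A B \<le> 1/2"
  then have big: "phi A B > 1/2" by simp
  from AB have A: "A \<in> carrier_mat 4 4" and B: "B \<in> carrier_mat 4 4" and trA: "mat_tr A = 0"
    and trB: "mat_tr B = 0" and nAB: "(frob_norm A)^2 + (frob_norm B)^2 = 1/4"
    unfolding calX_def by auto
  define K0 where "K0 = KK A B"
  have K0: "K0 \<in> carrier_mat 16 16" unfolding K0_def using KK_carrier[OF A B] .
  obtain u v where uc: "u \<in> carrier_vec 16" and vc: "v \<in> carrier_vec 16" and uu: "u \<bullet>c u = 1"
    and vv: "v \<bullet>c v = 1" and uv: "u \<bullet>c v = 0"
    and le: "(sigma K0 1)^2 + (sigma K0 2)^2 \<le> Re ((K0 *\<^sub>v u) \<bullet>c (K0 *\<^sub>v u)) + Re ((K0 *\<^sub>v v) \<bullet>c (K0 *\<^sub>v v))"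
    using kyfan(1)[OF K0] by auto
  obtain DA where DA: "DA \<in> carrier_mat 4 4" and trDA: "mat_tr DA = 0"
    and evA: "eventually (\<lambda>e. \<forall>c. c \<noteq> 0 \<longrightarrow> card {z. eigenvalue (c \<cdot>\<^sub>m (A + complex_of_real e \<cdot>\<^sub>m DA)) z} = 4) (at (0::real))"
    using perturb_one[OF A] by blast
  obtain DB where DB: "DB \<in> carrier_mat 4 4" and trDB: "mat_tr DB = 0"
    and evB: "eventually (\<lambda>e. \<forall>c. c \<noteq> 0 \<longrightarrow> card {z. eigenvalue (c \<cdot>\<^sub>m (B + complex_of_real e \<cdot>\<^sub>m DB)) z} = 4) (at (0::real))"
    using perturb_one[OF B] by blast
  define KD where "KD = KK DA DB"
  define f where "f = (\<lambda>e::real. (\<Sum>j<4::nat. \<Sum>i<4::nat. (cmod (A $$ (i,j) + complex_of_real e * DA $$ (i,j)))^2)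
     + (\<Sum>j<4::nat. \<Sum>i<4::nat. (cmod (B $$ (i,j) + complex_of_real e * DB $$ (i,j)))^2))"
  define s where "s = (\<lambda>e. 1 / (2 * sqrt (f e)))"
  define G where "G = (\<lambda>e. (\<Sum>p<16::nat. (cmod (complex_of_real (s e) * (\<Sum>q<16::nat. (K0 $$ (p,q) + complex_of_real e * KD $$ (p,q)) * u $ q)))^2)
     + (\<Sum>p<16::nat. (cmod (complex_of_real (s e) * (\<Sum>q<16::nat. (K0 $$ (p,q) + complex_of_real e * KD $$ (p,q)) * v $ q)))^2))"
  have f0: "f 0 = 1/4" unfolding f_def using nAB frob_sq[OF A] frob_sq[OF B] by simp
  have cf: "isCont f 0" unfolding f_def by (intro continuous_intros)
  have cs: "isCont s 0" unfolding s_def using f0 by (intro continuous_intros cf) auto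
  have s0: "s 0 = 1" unfolding s_def f0 by (simp add: real_sqrt_divide)
  have cG: "isCont G 0" unfolding G_def by (intro continuous_intros cs)
  have G0: "G 0 = Re ((K0 *\<^sub>v u) \<bullet>c (K0 *\<^sub>v u)) + Re ((K0 *\<^sub>v v) \<bullet>c (K0 *\<^sub>v v))"
    unfolding G_def s0 qf_sum[OF K0 uc] qf_sum[OF K0 vc] by simp
  have G0big: "G 0 > 1/2" using G0 le big unfolding phi_KK K0_def by simp
  have evf: "eventually (\<lambda>e. f e > 0) (at (0::real))"
    using order_tendstoD(1)[OF isContD[OF cf], of 0] f0 by simp
  have evG: "eventually (\<lambda>e. G e > 1/2) (at (0::real))"
    using order_tendstoD(1)[OF isContD[OF cG] G0big] .
  have "eventually (\<lambda>e. f e > 0 \<and> G e > 1/2 \<and>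
     (\<forall>c. c \<noteq> 0 \<longrightarrow> card {z. eigenvalue (c \<cdot>\<^sub>m (A + complex_of_real e \<cdot>\<^sub>m DA)) z} = 4) \<and>
     (\<forall>c. c \<noteq> 0 \<longrightarrow> card {z. eigenvalue (c \<cdot>\<^sub>m (B + complex_of_real e \<cdot>\<^sub>m DB)) z} = 4)) (at (0::real))"
    using evf evG evA evB by (intro eventually_conj)
  from eventually_happens'[OF at_neq_bot this] obtain e where fe: "f e > 0" and Ge: "G e > 1/2"
    and cA: "\<forall>c. c \<noteq> 0 \<longrightarrow> card {z. eigenvalue (c \<cdot>\<^sub>m (A + complex_of_real e \<cdot>\<^sub>m DA)) z} = 4"
    and cB: "\<forall>c. c \<noteq> 0 \<longrightarrow> card {z. eigenvalue (c \<cdot>\<^sub>m (B + complex_of_real e \<cdot>\<^sub>m DB)) z} = 4"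
    by blast
  define c where "c = complex_of_real (s e)"
  have se: "s e > 0" unfolding s_def using fe by simp
  have c0: "c \<noteq> 0" unfolding c_def using se by simp
  define A' where "A' = c \<cdot>\<^sub>m (A + complex_of_real e \<cdot>\<^sub>m DA)"
  define B' where "B' = c \<cdot>\<^sub>m (B + complex_of_real e \<cdot>\<^sub>m DB)"
  have A': "A' \<in> carrier_mat 4 4" unfolding A'_def using A DA by simp
  have B': "B' \<in> carrier_mat 4 4" unfolding B'_def using B DB by simp
  have trA': "mat_tr A' = 0" unfolding A'_def mat_tr_lin[OF A DA] trA trDA by simp
  have trB': "mat_tr B' = 0" unfolding B'_def mat_tr_lin[OF B DB] trB trDB by simp
  have nA': "(frob_norm A')^2 = (s e)^2 * (\<Sum>j<4::nat. \<Sum>i<4::nat. (cmod (A $$ (i,j) + complex_of_real e * DA $$ (i,j)))^2)"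
    unfolding frob_sq[OF A'] using A DA se
    by (simp add: A'_def c_def sum_distrib_left norm_mult power_mult_distrib)
  have nB': "(frob_norm B')^2 = (s e)^2 * (\<Sum>j<4::nat. \<Sum>i<4::nat. (cmod (B $$ (i,j) + complex_of_real e * DB $$ (i,j)))^2)"
    unfolding frob_sq[OF B'] using B DB se
    by (simp add: B'_def c_def sum_distrib_left norm_mult power_mult_distrib)
  have nAB': "(frob_norm A')^2 + (frob_norm B')^2 = 1/4"
  proof -
    have "(frob_norm A')^2 + (frob_norm B')^2 = (s e)^2 * f e" unfolding nA' nB' f_def by (simp add: algebra_simps)
    also have "\<dots> = 1/4" unfolding s_def using fe by (simp add: power_divide power_mult_distrib)
    finally show ?thesis .
  qed
  have Y: "(A', B') \<in> calY" unfolding calY_def calX_def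
    using A' B' trA' trB' nAB' cA cB c0 unfolding A'_def B'_def by auto
  define K' where "K' = KK A' B'"
  have K': "K' \<in> carrier_mat 16 16" unfolding K'_def using KK_carrier[OF A' B'] .
  have K'e: "K' $$ (p,q) = c * (K0 $$ (p,q) + complex_of_real e * KD $$ (p,q))" if "p < 16" "q < 16" for p q
    unfolding K'_def A'_def B'_def K0_def KD_def by (rule KK_lin[OF A B DA DB that])
  have rowe: "(\<Sum>q<16::nat. K' $$ (p,q) * w $ q) = c * (\<Sum>q<16::nat. (K0 $$ (p,q) + complex_of_real e * KD $$ (p,q)) * w $ q)"
    if "p < 16" for p and w :: "complex vec"
    using that K'e by (simp add: sum_distrib_left mult.assoc)
  have GK': "G e = Re ((K' *\<^sub>v u) \<bullet>c (K' *\<^sub>v u)) + Re ((K' *\<^sub>v v) \<bullet>c (K' *\<^sub>v v))"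
    unfolding qf_sum[OF K' uc] qf_sum[OF K' vc] G_def c_def[symmetric]
    by (simp add: rowe)
  have "G e \<le> phi A' B'" unfolding GK' phi_KK K'_def[symmetric] by (rule kyfan(2)[OF K' _ uc vc uu vv uv]) simp
  moreover have "phi A' B' \<le> 1/2" using hY Y by auto
  ultimately show False using Ge by simp
qed

theorem theorem3:
  shows "(\<forall>(A, B) \<in> calX. phi A B \<le> 1/2) \<longleftrightarrow> (\<forall>(A, B) \<in> calY. phi A B \<le> 1/2)"
proof
  assume "\<forall>(A, B) \<in> calX. phi A B \<le> 1/2"
  then show "\<forall>(A, B) \<in> calY. phi A B \<le> 1/2" unfolding calY_def by auto
next
  assume hY: "\<forall>(A, B) \<in> calY. phi A B \<le> 1/2"
  show "\<forall>(A, B) \<in> calX. phi A B \<le> 1/2" using main_back[OF hY] by auto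
qed

end
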